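(* Let $\mathcal T=(G,\mathbf T^{(1)},\dots,\mathbf T^{(n)})$ be a tensor network with contraction $\mathbf T\neq 0$. Then its absolute condition number is $\kappa_a(\mathcal T)=\max_{1\le i\le n}\|M_{\mathbf T^{(i)}}\|_2$ and its relative condition number is $\kappa_r(\mathcal T)=\frac{\sum_{i=1}^n\|\mathbf T^{(i)}\|_F}{\|\mathbf T\|_F}\max_{1\le i\le n}\|M_{\mathbf T^{(i)}}\|_2$.
   Context: Tensor network setup: A tensor network $\mathcal T=(G,\mathbf T^{(1)},\dots,\mathbf T^{(n)})$ consists of a multigraph $G$ with vertices $v_1,\dots,v_n$, whose edges are either edges between distinct vertices (contracted legs) or self-loops (uncontracted legs), each edge having a dimension, and tensors $\mathbf T^{(j)}$ at $v_j$ with one mode per incident edge. Its contraction $\mathbf T=\mathscr T_G(\mathbf T^{(1)},\dots,\mathbf T^{(n)})$ is obtained by summing over all contracted-edge indices the product of the entries of all $\mathbf T^{(j)}$; it is a tensor indexed by the uncontracted legs and is multilinear in the $\mathbf T^{(j)}$. The environment matrix $M_{\mathbf T^{(j)}}$ of site $j$ is the matrix of the linear map $X\mapsto\mathrm{vec}(\mathscr T_G(\mathbf T^{(1)},\dots,\mathbf T^{(j-1)},X,\mathbf T^{(j+1)},\dots,\mathbf T^{(n)}))$ acting on $\mathrm{vec}(X)$; thus $\mathrm{vec}(\mathbf T)=M_{\mathbf T^{(j)}}\mathrm{vec}(\mathbf T^{(j)})$. A sitewise perturbation is a tuple $\delta=(\delta^{(i)})_{i=1}^n$ of tensors with $\delta^{(i)}$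 of the same shape as $\mathbf T^{(i)}$; the perturbed tensor is $\hat{\mathbf T}=\mathscr T_G(\mathbf T^{(1)}+\delta^{(1)},\dots,\mathbf T^{(n)}+\delta^{(n)})$, the absolute error is $\mathscr E_a(\mathcal T,\delta)=\|\hat{\mathbf T}-\mathbf T\|_F$ and the relative error is $\mathscr E_r(\mathcal T,\delta)=\|\hat{\mathbf T}-\mathbf T\|_F/\|\mathbf T\|_F$. Here $\|\cdot\|_F$ is the Frobenius norm and $\|\cdot\|_2$ the spectral norm. Condition numbers: with $S_\epsilon=\{\delta:\sum_i\|\delta^{(i)}\|_F\le\epsilon\}$, $\kappa_a(\mathcal T)=\lim_{\epsilon\to0^+}\sup_{\delta\in S_\epsilon}\mathscr E_a(\mathcal T,\delta)/\epsilon$ and $\kappa_r(\mathcal T)=\frac{\sum_i\|\mathbf T^{(i)}\|_F}{\|\mathbf T\|_F}\kappa_a(\mathcal T)$. *)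

theory Defs
  imports Complex_Main "Jordan_Normal_Form.Matrix"
begin

text \<open>Multigraph of a tensor network: vertices 0..<nverts, a finite edge set,
  each edge with its two endpoints (equal endpoints = self-loop = uncontracted leg)
  and a dimension.\<close>
record 'e tn_graph =
  nverts :: nat
  edges :: "'e set"
  ends :: "'e \<Rightarrow> nat \<times> nat"
  dim :: "'e \<Rightarrow> nat"

text \<open>A tensor with modes indexed by an edge set S is a real function on index
  assignments; only assignments in idx G S matter (and we require it to be 0 elsewhere).\<close>
type_synonym 'e tensor = "('e \<Rightarrow> nat) \<Rightarrow> real"

definition incident :: "'e tn_graph \<Rightarrow> nat \<Rightarrow> 'e set" where
  "incident G j = {e \<in> edges G. fst (ends G e) = j \<or> snd (ends G e) = j}"

definition open_legs :: "'e tn_graph \<Rightarrow> 'e set" where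
  "open_legs G = {e \<in> edges G. fst (ends G e) = snd (ends G e)}"

definition contracted :: "'e tn_graph \<Rightarrow> 'e set" where
  "contracted G = {e \<in> edges G. fst (ends G e) \<noteq> snd (ends G e)}"

definition idx :: "'e tn_graph \<Rightarrow> 'e set \<Rightarrow> ('e \<Rightarrow> nat) set" where
  "idx G S = {\<alpha>. (\<forall>e\<in>S. \<alpha> e < dim G e) \<and> (\<forall>e. e \<notin> S \<longrightarrow> \<alpha> e = 0)}"

definition is_tensor :: "'e tn_graph \<Rightarrow> 'e set \<Rightarrow> 'e tensor \<Rightarrow> bool" where
  "is_tensor G S X \<longleftrightarrow> (\<forall>\<alpha>. \<alpha> \<notin> idx G S \<longrightarrow> X \<alpha> = 0)"

definition restrict_idx :: "'e set \<Rightarrow> ('e \<Rightarrow> nat) \<Rightarrow> ('e \<Rightarrow> nat)" where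
  "restrict_idx S \<alpha> = (\<lambda>e. if e \<in> S then \<alpha> e else 0)"

definition tnet :: "'e tn_graph \<Rightarrow> (nat \<Rightarrow> 'e tensor) \<Rightarrow> bool" where
  "tnet G Ts \<longleftrightarrow> 0 < nverts G \<and> finite (edges G)
     \<and> (\<forall>e\<in>edges G. fst (ends G e) < nverts G \<and> snd (ends G e) < nverts G \<and> 0 < dim G e)
     \<and> (\<forall>j<nverts G. is_tensor G (incident G j) (Ts j))"

definition contract :: "'e tn_graph \<Rightarrow> (nat \<Rightarrow> 'e tensor) \<Rightarrow> 'e tensor" where
  "contract G Ts = (\<lambda>\<beta>. if \<beta> \<in> idx G (open_legs G) then
      (\<Sum>\<gamma>\<in>idx G (contracted G).
          \<Prod>j<nverts G. Ts j (restrict_idx (incident G j)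
                (\<lambda>e. if e \<in> open_legs G then \<beta> e else \<gamma> e)))
    else 0)"

definition fnorm :: "'e tn_graph \<Rightarrow> 'e set \<Rightarrow> 'e tensor \<Rightarrow> real" where
  "fnorm G S X = sqrt (\<Sum>\<alpha>\<in>idx G S. (X \<alpha>)\<^sup>2)"

definition perturbations :: "'e tn_graph \<Rightarrow> (nat \<Rightarrow> 'e tensor) set" where
  "perturbations G = {\<delta>. \<forall>i<nverts G. is_tensor G (incident G i) (\<delta> i)}"

definition abs_err :: "'e tn_graph \<Rightarrow> (nat \<Rightarrow> 'e tensor) \<Rightarrow> (nat \<Rightarrow> 'e tensor) \<Rightarrow> real" where
  "abs_err G Ts \<delta> = fnorm G (open_legs G)
      (\<lambda>\<beta>. contract G (\<lambda>i \<alpha>. Ts i \<alpha> + \<delta> i \<alpha>) \<beta> - contract G Ts \<beta>)"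

definition rel_err :: "'e tn_graph \<Rightarrow> (nat \<Rightarrow> 'e tensor) \<Rightarrow> (nat \<Rightarrow> 'e tensor) \<Rightarrow> real" where
  "rel_err G Ts \<delta> = abs_err G Ts \<delta> / fnorm G (open_legs G) (contract G Ts)"

definition S_eps :: "'e tn_graph \<Rightarrow> real \<Rightarrow> (nat \<Rightarrow> 'e tensor) set" where
  "S_eps G \<epsilon> = {\<delta> \<in> perturbations G. (\<Sum>i<nverts G. fnorm G (incident G i) (\<delta> i)) \<le> \<epsilon>}"

definition kappa_a :: "'e tn_graph \<Rightarrow> (nat \<Rightarrow> 'e tensor) \<Rightarrow> real" where
  "kappa_a G Ts = Lim (at_right 0) (\<lambda>\<epsilon>. SUP \<delta>\<in>S_eps G \<epsilon>. abs_err G Ts \<delta> / \<epsilon>)"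

definition kappa_r :: "'e tn_graph \<Rightarrow> (nat \<Rightarrow> 'e tensor) \<Rightarrow> real" where
  "kappa_r G Ts = (\<Sum>i<nverts G. fnorm G (incident G i) (Ts i))
                    / fnorm G (open_legs G) (contract G Ts) * kappa_a G Ts"

text \<open>Vectorization: a fixed (arbitrary) enumeration of the index set; the spectral
  norm of the environment matrix does not depend on this choice.\<close>
definition idx_enum :: "'e tn_graph \<Rightarrow> 'e set \<Rightarrow> nat \<Rightarrow> ('e \<Rightarrow> nat)" where
  "idx_enum G S = (SOME f. bij_betw f {..<card (idx G S)} (idx G S))"

definition tvec :: "'e tn_graph \<Rightarrow> 'e set \<Rightarrow> 'e tensor \<Rightarrow> real vec" where
  "tvec G S X = vec (card (idx G S)) (\<lambda>k. X (idx_enum G S k))"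

definition unit_tensor :: "'e tn_graph \<Rightarrow> 'e set \<Rightarrow> nat \<Rightarrow> 'e tensor" where
  "unit_tensor G S c = (\<lambda>\<alpha>. if \<alpha> = idx_enum G S c then 1 else 0)"

text \<open>Environment matrix of site j: the matrix of X \<mapsto> vec(contraction with X at site j)
  acting on vec(X); column c is the image of the c-th standard basis vector.\<close>
definition env_mat :: "'e tn_graph \<Rightarrow> (nat \<Rightarrow> 'e tensor) \<Rightarrow> nat \<Rightarrow> real mat" where
  "env_mat G Ts j = mat (card (idx G (open_legs G))) (card (idx G (incident G j)))
     (\<lambda>(r, c). contract G (Ts(j := unit_tensor G (incident G j) c))
                 (idx_enum G (open_legs G) r))"

definition vnorm2 :: "real vec \<Rightarrow> real" where
  "vnorm2 v = sqrt (\<Sum>i<dim_vec v. (v $ i)\<^sup>2)"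

definition spec_norm :: "real mat \<Rightarrow> real" where
  "spec_norm A = Sup {vnorm2 (A *\<^sub>v x) / vnorm2 x | x.
                        x \<in> carrier_vec (dim_col A) \<and> x \<noteq> 0\<^sub>v (dim_col A)}"

end

theory Submission
  imports Defs "HOL-Analysis.L2_Norm"
begin

lemma fnorm_L2: "fnorm G S X = L2_set X (idx G S)"
  by (simp add: fnorm_def L2_set_def)

lemma finite_idx:
  assumes "finite S" shows "finite (idx G S)"
proof -
  define N where "N = (\<Sum>e\<in>S. dim G e)"
  have "idx G S \<subseteq> {f. \<forall>x. (x \<in> S \<longrightarrow> f x \<in> {..<N}) \<and> (x \<notin> S \<longrightarrow> f x = 0)}"
  proof
    fix \<alpha> assume a: "\<alpha> \<in> idx G S"
    have "\<forall>x\<in>S. \<alpha> x < N"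
    proof
      fix x assume "x \<in> S"
      then have "dim G x \<le> N" unfolding N_def using assms by (intro member_le_sum) auto
      then show "\<alpha> x < N" using a \<open>x\<in>S\<close> unfolding idx_def by force
    qed
    then show "\<alpha> \<in> {f. \<forall>x. (x \<in> S \<longrightarrow> f x \<in> {..<N}) \<and> (x \<notin> S \<longrightarrow> f x = 0)}"
      using a unfolding idx_def by auto
  qed
  moreover have "finite {f. \<forall>x. (x \<in> S \<longrightarrow> f x \<in> {..<N}) \<and> (x \<notin> S \<longrightarrow> f x = (0::nat))}"
    by (rule finite_set_of_finite_funs) (use assms in auto)
  ultimately show ?thesis by (rule finite_subset)
qed

lemma zero_in_idx: "(\<And>e. e \<in> S \<Longrightarrow> 0 < dim G e) \<Longrightarrow> (\<lambda>_. 0) \<in> idx G S"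
  by (auto simp: idx_def)

lemma idx_enum_bij:
  assumes "finite S" shows "bij_betw (idx_enum G S) {..<card (idx G S)} (idx G S)"
proof -
  have "\<exists>f. bij_betw f {..<card (idx G S)} (idx G S)"
    using ex_bij_betw_nat_finite[OF finite_idx[OF assms]] by (simp add: atLeast0LessThan)
  then show ?thesis unfolding idx_enum_def by (rule someI_ex)
qed

lemma sum_enum:
  assumes "finite S"
  shows "(\<Sum>c<card (idx G S). h (idx_enum G S c)) = (\<Sum>\<alpha>\<in>idx G S. h \<alpha>)"
  using sum.reindex_bij_betw[OF idx_enum_bij[OF assms], of h] by simp

lemma vnorm2_L2: "vnorm2 v = L2_set (\<lambda>i. v $ i) {..<dim_vec v}"
  by (simp add: vnorm2_def L2_set_def)

lemma fnorm_tvec: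
  assumes "finite S" shows "vnorm2 (tvec G S X) = fnorm G S X"
  unfolding vnorm2_def tvec_def fnorm_def using sum_enum[OF assms, of "\<lambda>\<alpha>. (X \<alpha>)\<^sup>2"]
  by simp

lemma abs_le_L2: "finite A \<Longrightarrow> a \<in> A \<Longrightarrow> \<bar>f a\<bar> \<le> L2_set f A"
proof -
  assume "finite A" "a \<in> A"
  then have "\<bar>f a\<bar> \<le> L2_set (\<lambda>x. \<bar>f x\<bar>) A" by (rule member_le_L2_set)
  also have "L2_set (\<lambda>x. \<bar>f x\<bar>) A = L2_set f A" by (simp add: L2_set_def)
  finally show ?thesis .
qed

lemma L2_set_minus: "L2_set (\<lambda>x. - f x) A = L2_set f A"
  by (simp add: L2_set_def)

lemma L2_set_sum_le:
  "L2_set (\<lambda>x. \<Sum>i\<in>I. g i x) A \<le> (\<Sum>i\<in>I. L2_set (g i) A)"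
proof (induction I rule: infinite_finite_induct)
  case (infinite I) then show ?case by (simp add: L2_set_def)
next
  case empty then show ?case by (simp add: L2_set_def)
next
  case (insert i I)
  have "L2_set (\<lambda>x. \<Sum>i\<in>insert i I. g i x) A = L2_set (\<lambda>x. g i x + (\<Sum>i\<in>I. g i x)) A"
    using insert by simp
  also have "\<dots> \<le> L2_set (g i) A + L2_set (\<lambda>x. \<Sum>i\<in>I. g i x) A"
    by (rule L2_set_triangle_ineq)
  also have "\<dots> \<le> L2_set (g i) A + (\<Sum>i\<in>I. L2_set (g i) A)" using insert by simp
  finally show ?case using insert by simp
qed


lemma vnorm2_pos:
  assumes "x \<in> carrier_vec n" "x \<noteq> 0\<^sub>v n" shows "0 < vnorm2 x"
proof -
  obtain i where i: "i < n" "x $ i \<noteq> 0"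
    using assms by (metis carrier_vecD eq_vecI index_zero_vec)
  have "vnorm2 x \<noteq> 0"
    using i assms L2_set_eq_0_iff[of "{..<dim_vec x}" "\<lambda>i. x $ i"] by (auto simp: vnorm2_L2)
  moreover have "vnorm2 x \<ge> 0" by (simp add: vnorm2_L2)
  ultimately show ?thesis by linarith
qed

lemma vnorm2_zero: "vnorm2 (0\<^sub>v n) = 0"
  by (simp add: vnorm2_def)

lemma mat_vec_bound:
  fixes A :: "real mat"
  assumes x: "x \<in> carrier_vec (dim_col A)"
  shows "vnorm2 (A *\<^sub>v x) \<le> (\<Sum>r<dim_row A. \<Sum>c<dim_col A. \<bar>A $$ (r,c)\<bar>) * vnorm2 x"
proof -
  have "vnorm2 (A *\<^sub>v x) \<le> (\<Sum>r<dim_row A. \<bar>(A *\<^sub>v x) $ r\<bar>)"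
    unfolding vnorm2_L2 dim_mult_mat_vec by (rule L2_set_le_sum_abs)
  also have "\<dots> \<le> (\<Sum>r<dim_row A. (\<Sum>c<dim_col A. \<bar>A $$ (r,c)\<bar>) * vnorm2 x)"
  proof (rule sum_mono)
    fix r assume r: "r \<in> {..<dim_row A}"
    have "(A *\<^sub>v x) $ r = (\<Sum>c<dim_col A. A $$ (r,c) * x $ c)"
      using r x by (auto simp: scalar_prod_def atLeast0LessThan intro!: sum.cong)
    also have "\<bar>\<dots>\<bar> \<le> (\<Sum>c<dim_col A. \<bar>A $$ (r,c)\<bar> * \<bar>x $ c\<bar>)"
      by (rule order_trans[OF sum_abs]) (simp add: abs_mult)
    also have "\<dots> \<le> (\<Sum>c<dim_col A. \<bar>A $$ (r,c)\<bar> * vnorm2 x)"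
    proof (rule sum_mono)
      fix c assume "c \<in> {..<dim_col A}"
      then have "\<bar>x $ c\<bar> \<le> vnorm2 x" using x unfolding vnorm2_L2
        by (intro abs_le_L2) auto
      then show "\<bar>A $$ (r,c)\<bar> * \<bar>x $ c\<bar> \<le> \<bar>A $$ (r,c)\<bar> * vnorm2 x"
        by (simp add: mult_left_mono)
    qed
    finally show "\<bar>(A *\<^sub>v x) $ r\<bar> \<le> (\<Sum>c<dim_col A. \<bar>A $$ (r,c)\<bar>) * vnorm2 x"
      by (simp add: sum_distrib_right)
  qed
  finally show ?thesis by (simp add: sum_distrib_right)
qed

definition spec_set :: "real mat \<Rightarrow> real set" where
  "spec_set A = {vnorm2 (A *\<^sub>v x) / vnorm2 x | x.
                        x \<in> carrier_vec (dim_col A) \<and> x \<noteq> 0\<^sub>v (dim_col A)}"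

lemma spec_norm_set: "spec_norm A = Sup (spec_set A)"
  by (simp add: spec_norm_def spec_set_def)

lemma spec_set_bdd: "bdd_above (spec_set A)"
proof -
  let ?C = "(\<Sum>r<dim_row A. \<Sum>c<dim_col A. \<bar>A $$ (r,c)\<bar>)"
  have "\<forall>y\<in>spec_set A. y \<le> ?C"
  proof
    fix y assume "y \<in> spec_set A"
    then obtain x where x: "y = vnorm2 (A *\<^sub>v x) / vnorm2 x" "x \<in> carrier_vec (dim_col A)"
       "x \<noteq> 0\<^sub>v (dim_col A)" unfolding spec_set_def by blast
    have p: "0 < vnorm2 x" using vnorm2_pos x by blast
    show "y \<le> ?C" using mat_vec_bound[OF x(2)] p x(1) by (simp add: divide_le_eq)
  qed
  then show ?thesis by (intro bdd_aboveI[of _ ?C]) blast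
qed

lemma spec_set_ne: "0 < dim_col A \<Longrightarrow> spec_set A \<noteq> {}"
proof -
  assume "0 < dim_col A"
  then have "unit_vec (dim_col A) 0 \<in> carrier_vec (dim_col A)"
     "unit_vec (dim_col A) 0 \<noteq> (0\<^sub>v (dim_col A) :: real vec)"
    by (auto simp: unit_vec_def vec_eq_iff)
  then show ?thesis unfolding spec_set_def by blast
qed

lemma spec_le:
  fixes A :: "real mat"
  assumes x: "x \<in> carrier_vec (dim_col A)" and pos: "0 < dim_col A"
  shows "vnorm2 (A *\<^sub>v x) \<le> spec_norm A * vnorm2 x"
proof (cases "x = 0\<^sub>v (dim_col A)")
  case True
  have "A *\<^sub>v x = 0\<^sub>v (dim_row A)" using True by (auto simp: scalar_prod_def)
  then have "vnorm2 (A *\<^sub>v x) = 0" by (simp add: vnorm2_zero)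
  then show ?thesis using True by (simp add: vnorm2_zero)
next
  case False
  have p: "0 < vnorm2 x" using vnorm2_pos x False by blast
  have "vnorm2 (A *\<^sub>v x) / vnorm2 x \<in> spec_set A" using x False unfolding spec_set_def by blast
  then have "vnorm2 (A *\<^sub>v x) / vnorm2 x \<le> spec_norm A"
    unfolding spec_norm_set using spec_set_bdd by (rule cSup_upper)
  then show ?thesis using p by (simp add: divide_le_eq)
qed

lemma spec_nonneg:
  fixes A :: "real mat"
  assumes pos: "0 < dim_col A" shows "0 \<le> spec_norm A"
proof -
  obtain y where "y \<in> spec_set A" using spec_set_ne[OF pos] by blast
  moreover have "0 \<le> y" using \<open>y \<in> spec_set A\<close> unfolding spec_set_def
    by (auto simp: vnorm2_def intro!: divide_nonneg_nonneg sum_nonneg)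
  ultimately show ?thesis unfolding spec_norm_set
    by (meson cSup_upper2 order_refl spec_set_bdd)
qed

lemma spec_approx:
  fixes A :: "real mat"
  assumes pos: "0 < dim_col A" and eta: "0 < \<eta>"
  obtains x where "x \<in> carrier_vec (dim_col A)" "x \<noteq> 0\<^sub>v (dim_col A)"
    "(spec_norm A - \<eta>) * vnorm2 x < vnorm2 (A *\<^sub>v x)"
proof -
  have "spec_norm A - \<eta> < Sup (spec_set A)" using eta by (simp add: spec_norm_set)
  then obtain y where "y \<in> spec_set A" "spec_norm A - \<eta> < y"
    using spec_set_ne[OF pos] by (blast elim: less_cSupE)
  then obtain x where x: "y = vnorm2 (A *\<^sub>v x) / vnorm2 x" "x \<in> carrier_vec (dim_col A)"
       "x \<noteq> 0\<^sub>v (dim_col A)" unfolding spec_set_def by blast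
  have p: "0 < vnorm2 x" using vnorm2_pos x by blast
  show ?thesis using that[OF x(2,3)] \<open>spec_norm A - \<eta> < y\<close> x(1) p by (simp add: less_divide_eq)
qed

lemma prod_abs_le:
  fixes x :: "nat \<Rightarrow> real"
  assumes "\<And>k. k<n \<Longrightarrow> \<bar>x k\<bar> \<le> K"
  shows "\<bar>\<Prod>k<n. x k\<bar> \<le> K ^ n"
proof -
  have "\<bar>\<Prod>k<n. x k\<bar> = (\<Prod>k<n. \<bar>x k\<bar>)" by (simp add: abs_prod)
  also have "\<dots> \<le> (\<Prod>k<n. K)" by (rule prod_mono) (use assms in auto)
  finally show ?thesis by simp
qed

lemma prod_diff_bound:
  fixes x y :: "nat \<Rightarrow> real"
  assumes "\<And>k. k<n \<Longrightarrow> \<bar>x k\<bar> \<le> K" "\<And>k. k<n \<Longrightarrow> \<bar>y k\<bar> \<le> 1" "0 \<le> K"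
  shows "\<bar>(\<Prod>k<n. x k + y k) - (\<Prod>k<n. x k)\<bar> \<le> (\<Sum>k<n. \<bar>y k\<bar>) * (K+1)^n"
  using assms(1,2)
proof (induction n)
  case 0 then show ?case by simp
next
  case (Suc n)
  define P' where "P' = (\<Prod>k<n. x k + y k)"
  define P where "P = (\<Prod>k<n. x k)"
  define s where "s = (\<Sum>k<n. \<bar>y k\<bar>)"
  have IH: "\<bar>P' - P\<bar> \<le> s * (K+1)^n" using Suc unfolding P'_def P_def s_def by simp
  have hP: "\<bar>P\<bar> \<le> K^n" unfolding P_def by (rule prod_abs_le) (use Suc in auto)
  have xn: "\<bar>x n\<bar> \<le> K" and yn: "\<bar>y n\<bar> \<le> 1" using Suc by auto
  have s0: "0 \<le> s" unfolding s_def by (simp add: sum_nonneg)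
  have eq: "(\<Prod>k<Suc n. x k + y k) - (\<Prod>k<Suc n. x k) = (P' - P) * (x n + y n) + P * y n"
    by (simp add: P'_def P_def algebra_simps)
  have "\<bar>(P' - P) * (x n + y n) + P * y n\<bar> \<le> \<bar>P' - P\<bar> * \<bar>x n + y n\<bar> + \<bar>P\<bar> * \<bar>y n\<bar>"
    by (metis abs_mult abs_triangle_ineq)
  also have "\<dots> \<le> (s * (K+1)^n) * (K + 1) + K^n * \<bar>y n\<bar>"
  proof (rule add_mono)
    have "\<bar>x n + y n\<bar> \<le> K + 1" using xn yn by linarith
    then show "\<bar>P' - P\<bar> * \<bar>x n + y n\<bar> \<le> (s * (K+1)^n) * (K + 1)"
      using IH by (intro mult_mono) (auto simp: s0 assms(3))
    show "\<bar>P\<bar> * \<bar>y n\<bar> \<le> K ^ n * \<bar>y n\<bar>" using hP by (simp add: mult_right_mono)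
  qed
  also have "\<dots> \<le> (s * (K+1)^n) * (K + 1) + (K+1)^Suc n * \<bar>y n\<bar>"
  proof -
    have "K^n \<le> (K+1)^n" by (rule power_mono) (use assms(3) in auto)
    also have "\<dots> \<le> (K+1)^Suc n" using assms(3) by (simp add: power_increasing)
    finally show ?thesis by (simp add: mult_right_mono)
  qed
  also have "\<dots> = (s + \<bar>y n\<bar>) * (K+1)^Suc n" by (simp add: algebra_simps)
  finally show ?case using eq by (simp add: s_def)
qed

lemma prod_lin_bound:
  fixes x y :: "nat \<Rightarrow> real"
  assumes "\<And>k. k<n \<Longrightarrow> \<bar>x k\<bar> \<le> K" "\<And>k. k<n \<Longrightarrow> \<bar>y k\<bar> \<le> 1" "0 \<le> K"
  shows "\<bar>(\<Prod>k<n. x k + y k) - (\<Prod>k<n. x k)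
           - (\<Sum>i<n. \<Prod>k<n. if k = i then y k else x k)\<bar> \<le> (\<Sum>k<n. \<bar>y k\<bar>)^2 * (K+1)^n"
  using assms(1,2)
proof (induction n)
  case 0 then show ?case by simp
next
  case (Suc n)
  define P' where "P' = (\<Prod>k<n. x k + y k)"
  define P where "P = (\<Prod>k<n. x k)"
  define L where "L = (\<Sum>i<n. \<Prod>k<n. if k = i then y k else x k)"
  define s where "s = (\<Sum>k<n. \<bar>y k\<bar>)"
  have IH: "\<bar>P' - P - L\<bar> \<le> s^2 * (K+1)^n" using Suc unfolding P'_def P_def s_def L_def by simp
  have D: "\<bar>P' - P\<bar> \<le> s * (K+1)^n" unfolding P'_def P_def s_def
    by (rule prod_diff_bound) (use Suc assms(3) in auto)
  have xn: "\<bar>x n\<bar> \<le> K" and yn: "\<bar>y n\<bar> \<le> 1" using Suc by auto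
  have s0: "0 \<le> s" unfolding s_def by (simp add: sum_nonneg)
  have L1: "(\<Sum>i<Suc n. \<Prod>k<Suc n. if k = i then y k else x k) = L * x n + P * y n"
  proof -
    have a: "(\<Prod>k<Suc n. if k = i then y k else x k) = (\<Prod>k<n. if k = i then y k else x k) * x n"
      if "i < n" for i using that by simp
    have b: "(\<Prod>k<n. if k = n then y k else x k) = P" unfolding P_def by (rule prod.cong) auto
    show ?thesis using a b by (simp add: L_def sum_distrib_right)
  qed
  have eq: "(\<Prod>k<Suc n. x k + y k) - (\<Prod>k<Suc n. x k)
           - (\<Sum>i<Suc n. \<Prod>k<Suc n. if k = i then y k else x k) = (P' - P - L) * x n + (P' - P) * y n"
    unfolding L1 by (simp add: P'_def P_def algebra_simps)
  have "\<bar>(P' - P - L) * x n + (P' - P) * y n\<bar> \<le> \<bar>P' - P - L\<bar> * \<bar>x n\<bar> + \<bar>P' - P\<bar> * \<bar>y n\<bar>"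
    by (metis abs_mult abs_triangle_ineq)
  also have "\<dots> \<le> (s^2 * (K+1)^n) * K + (s * (K+1)^n) * \<bar>y n\<bar>"
    by (intro add_mono mult_mono) (use IH D xn in auto)
  also have "\<dots> \<le> (s^2 * (K+1)^n) * (K+1) + (s * (K+1)^n) * (\<bar>y n\<bar> * (K+1))"
  proof -
    have "\<bar>y n\<bar> * 1 \<le> \<bar>y n\<bar> * (K+1)" using assms(3) by (intro mult_left_mono) auto
    then show ?thesis using assms(3) s0 by (intro add_mono mult_left_mono) (auto simp: mult_nonneg_nonneg)
  qed
  also have "\<dots> = (s^2 + s * \<bar>y n\<bar>) * (K+1)^Suc n" by (simp add: algebra_simps)
  also have "\<dots> \<le> (s + \<bar>y n\<bar>)^2 * (K+1)^Suc n"
    using s0 assms(3) by (intro mult_right_mono) (auto simp: power2_eq_square algebra_simps)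
  finally show ?case using eq by (simp add: s_def)
qed


definition asg :: "'e tn_graph \<Rightarrow> ('e \<Rightarrow> nat) \<Rightarrow> ('e \<Rightarrow> nat) \<Rightarrow> ('e \<Rightarrow> nat)" where
  "asg G \<beta> \<gamma> = (\<lambda>e. if e \<in> open_legs G then \<beta> e else \<gamma> e)"

definition ai :: "'e tn_graph \<Rightarrow> nat \<Rightarrow> ('e \<Rightarrow> nat) \<Rightarrow> ('e \<Rightarrow> nat) \<Rightarrow> ('e \<Rightarrow> nat)" where
  "ai G i \<beta> \<gamma> = restrict_idx (incident G i) (asg G \<beta> \<gamma>)"

definition Qf :: "'e tn_graph \<Rightarrow> (nat \<Rightarrow> 'e tensor) \<Rightarrow> nat \<Rightarrow> ('e \<Rightarrow> nat) \<Rightarrow> ('e \<Rightarrow> nat) \<Rightarrow> real" where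
  "Qf G Ts i \<beta> \<gamma> = (\<Prod>k\<in>{..<nverts G}-{i}. Ts k (ai G k \<beta> \<gamma>))"

lemma contract_eq:
  "\<beta> \<in> idx G (open_legs G) \<Longrightarrow> contract G Xs \<beta> =
     (\<Sum>\<gamma>\<in>idx G (contracted G). \<Prod>j<nverts G. Xs j (ai G j \<beta> \<gamma>))"
  by (simp add: contract_def ai_def asg_def)

lemma contract_out:
  "\<beta> \<notin> idx G (open_legs G) \<Longrightarrow> contract G Xs \<beta> = 0"
  by (simp add: contract_def)

lemma ai_in:
  assumes "\<beta> \<in> idx G (open_legs G)" "\<gamma> \<in> idx G (contracted G)"
  shows "ai G i \<beta> \<gamma> \<in> idx G (incident G i)"
  using assms unfolding idx_def ai_def restrict_idx_def asg_def incident_def open_legs_def contracted_def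
  by auto

lemma site_form:
  assumes "i < nverts G" "\<beta> \<in> idx G (open_legs G)"
  shows "contract G (Ts(i:=X)) \<beta> = (\<Sum>\<gamma>\<in>idx G (contracted G). X (ai G i \<beta> \<gamma>) * Qf G Ts i \<beta> \<gamma>)"
proof -
  have "(\<Prod>j<nverts G. (Ts(i:=X)) j (ai G j \<beta> \<gamma>)) = X (ai G i \<beta> \<gamma>) * Qf G Ts i \<beta> \<gamma>" for \<gamma>
  proof -
    have "(\<Prod>j<nverts G. (Ts(i:=X)) j (ai G j \<beta> \<gamma>)) =
       (Ts(i:=X)) i (ai G i \<beta> \<gamma>) * (\<Prod>j\<in>{..<nverts G}-{i}. (Ts(i:=X)) j (ai G j \<beta> \<gamma>))"
      using assms(1) by (intro prod.remove) auto
    also have "(\<Prod>j\<in>{..<nverts G}-{i}. (Ts(i:=X)) j (ai G j \<beta> \<gamma>)) = Qf G Ts i \<beta> \<gamma>"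
      unfolding Qf_def by (rule prod.cong) auto
    finally show ?thesis by simp
  qed
  then show ?thesis using assms by (simp add: contract_eq)
qed

lemma lin_term:
  assumes "\<beta> \<in> idx G (open_legs G)"
  shows "contract G (Ts(i:=\<delta> i)) \<beta> = (\<Sum>\<gamma>\<in>idx G (contracted G).
      \<Prod>k<nverts G. if k = i then \<delta> k (ai G k \<beta> \<gamma>) else Ts k (ai G k \<beta> \<gamma>))"
  using assms by (auto simp add: contract_eq intro!: sum.cong prod.cong)

lemma tnet_finite_inc: "tnet G Ts \<Longrightarrow> finite (incident G i)"
  unfolding tnet_def incident_def by auto

lemma tnet_finite_open: "tnet G Ts \<Longrightarrow> finite (open_legs G)"
  unfolding tnet_def open_legs_def by auto

lemma tnet_finite_contr: "tnet G Ts \<Longrightarrow> finite (contracted G)"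
  unfolding tnet_def contracted_def by auto

lemma tnet_card_inc: "tnet G Ts \<Longrightarrow> 0 < card (idx G (incident G i))"
proof -
  assume tn: "tnet G Ts"
  have "(\<lambda>_. 0) \<in> idx G (incident G i)"
    by (rule zero_in_idx) (use tn in \<open>auto simp: tnet_def incident_def\<close>)
  then show ?thesis using finite_idx[OF tnet_finite_inc[OF tn]] card_gt_0_iff by blast
qed

lemma env_mult:
  assumes tn: "tnet G Ts" and i: "i < nverts G"
  shows "env_mat G Ts i *\<^sub>v tvec G (incident G i) X = tvec G (open_legs G) (contract G (Ts(i:=X)))"
proof (rule eq_vecI)
  let ?m = "card (idx G (incident G i))"
  let ?A = "idx G (incident G i)"
  have fA: "finite (incident G i)" by (rule tnet_finite_inc[OF tn])
  fix r assume r: "r < dim_vec (tvec G (open_legs G) (contract G (Ts(i:=X))))"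
  then have r': "r < card (idx G (open_legs G))" by (simp add: tvec_def)
  define \<beta> where "\<beta> = idx_enum G (open_legs G) r"
  have b: "\<beta> \<in> idx G (open_legs G)" unfolding \<beta>_def
    using idx_enum_bij[OF tnet_finite_open[OF tn]] r' by (auto simp: bij_betw_def)
  have "(env_mat G Ts i *\<^sub>v tvec G (incident G i) X) $ r
     = (\<Sum>c<?m. contract G (Ts(i := unit_tensor G (incident G i) c)) \<beta> * X (idx_enum G (incident G i) c))"
    using r' by (simp add: env_mat_def tvec_def scalar_prod_def atLeast0LessThan \<beta>_def)
  also have "\<dots> = (\<Sum>c<?m. \<Sum>\<gamma>\<in>idx G (contracted G).
      (if ai G i \<beta> \<gamma> = idx_enum G (incident G i) c then X (idx_enum G (incident G i) c) else 0) * Qf G Ts i \<beta> \<gamma>)"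
    by (auto simp add: site_form[OF i b] unit_tensor_def sum_distrib_right intro!: sum.cong)
  also have "\<dots> = (\<Sum>\<gamma>\<in>idx G (contracted G). \<Sum>c<?m.
      (if ai G i \<beta> \<gamma> = idx_enum G (incident G i) c then X (idx_enum G (incident G i) c) else 0) * Qf G Ts i \<beta> \<gamma>)"
    by (rule sum.swap)
  also have "\<dots> = (\<Sum>\<gamma>\<in>idx G (contracted G). X (ai G i \<beta> \<gamma>) * Qf G Ts i \<beta> \<gamma>)"
  proof (rule sum.cong[OF refl])
    fix \<gamma> assume g: "\<gamma> \<in> idx G (contracted G)"
    have "(\<Sum>c<?m. (if ai G i \<beta> \<gamma> = idx_enum G (incident G i) c then X (idx_enum G (incident G i) c) else 0) * Qf G Ts i \<beta> \<gamma>)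
       = (\<Sum>\<alpha>\<in>?A. (if ai G i \<beta> \<gamma> = \<alpha> then X \<alpha> else 0) * Qf G Ts i \<beta> \<gamma>)"
      by (rule sum_enum[OF fA])
    also have "\<dots> = X (ai G i \<beta> \<gamma>) * Qf G Ts i \<beta> \<gamma>"
      using ai_in[OF b g, of i] finite_idx[OF fA] by (simp add: if_distrib[of "\<lambda>z. z * _"] cong: if_cong)
    finally show "(\<Sum>c<?m. (if ai G i \<beta> \<gamma> = idx_enum G (incident G i) c then X (idx_enum G (incident G i) c) else 0) * Qf G Ts i \<beta> \<gamma>)
       = X (ai G i \<beta> \<gamma>) * Qf G Ts i \<beta> \<gamma>" .
  qed
  also have "\<dots> = tvec G (open_legs G) (contract G (Ts(i:=X))) $ r"
  proof -
    have "tvec G (open_legs G) (contract G (Ts(i:=X))) $ r = contract G (Ts(i:=X)) \<beta>"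
      using r' by (simp add: tvec_def \<beta>_def)
    then show ?thesis by (simp add: site_form[OF i b])
  qed
  finally show "(env_mat G Ts i *\<^sub>v tvec G (incident G i) X) $ r = tvec G (open_legs G) (contract G (Ts(i:=X))) $ r" .
next
  show "dim_vec (env_mat G Ts i *\<^sub>v tvec G (incident G i) X) = dim_vec (tvec G (open_legs G) (contract G (Ts(i:=X))))"
    by (simp add: env_mat_def tvec_def)
qed

lemma fnorm_contract_le:
  assumes tn: "tnet G Ts" and i: "i < nverts G"
  shows "fnorm G (open_legs G) (contract G (Ts(i:=X))) \<le> spec_norm (env_mat G Ts i) * fnorm G (incident G i) X"
proof -
  have "fnorm G (open_legs G) (contract G (Ts(i:=X))) = vnorm2 (env_mat G Ts i *\<^sub>v tvec G (incident G i) X)"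
    by (simp add: env_mult[OF tn i] fnorm_tvec[OF tnet_finite_open[OF tn]])
  also have "\<dots> \<le> spec_norm (env_mat G Ts i) * vnorm2 (tvec G (incident G i) X)"
    by (rule spec_le) (auto simp: env_mat_def tvec_def tnet_card_inc[OF tn])
  finally show ?thesis by (simp add: fnorm_tvec[OF tnet_finite_inc[OF tn]])
qed


definition Kc :: "'e tn_graph \<Rightarrow> (nat \<Rightarrow> 'e tensor) \<Rightarrow> real" where
  "Kc G Ts = (\<Sum>i<nverts G. \<Sum>a\<in>idx G (incident G i). \<bar>Ts i a\<bar>)"

definition Cst :: "'e tn_graph \<Rightarrow> (nat \<Rightarrow> 'e tensor) \<Rightarrow> real" where
  "Cst G Ts = real (card (idx G (open_legs G))) * real (card (idx G (contracted G))) * (Kc G Ts + 1) ^ nverts G"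

definition Lin :: "'e tn_graph \<Rightarrow> (nat \<Rightarrow> 'e tensor) \<Rightarrow> (nat \<Rightarrow> 'e tensor) \<Rightarrow> 'e tensor" where
  "Lin G Ts \<delta> = (\<lambda>\<beta>. \<Sum>i<nverts G. contract G (Ts(i:=\<delta> i)) \<beta>)"

definition Rm :: "'e tn_graph \<Rightarrow> (nat \<Rightarrow> 'e tensor) \<Rightarrow> (nat \<Rightarrow> 'e tensor) \<Rightarrow> 'e tensor" where
  "Rm G Ts \<delta> = (\<lambda>\<beta>. contract G (\<lambda>i \<alpha>. Ts i \<alpha> + \<delta> i \<alpha>) \<beta> - contract G Ts \<beta> - Lin G Ts \<delta> \<beta>)"

lemma Kc_nonneg: "0 \<le> Kc G Ts"
  unfolding Kc_def by (intro sum_nonneg) auto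

lemma Ts_bound:
  assumes tn: "tnet G Ts" and i: "i < nverts G" and a: "a \<in> idx G (incident G i)"
  shows "\<bar>Ts i a\<bar> \<le> Kc G Ts"
proof -
  have "\<bar>Ts i a\<bar> \<le> (\<Sum>a\<in>idx G (incident G i). \<bar>Ts i a\<bar>)"
    using a finite_idx[OF tnet_finite_inc[OF tn]] by (intro member_le_sum) auto
  also have "\<dots> \<le> Kc G Ts" unfolding Kc_def
    using i by (intro member_le_sum[where f="\<lambda>i. \<Sum>a\<in>idx G (incident G i). \<bar>Ts i a\<bar>"] sum_nonneg) auto
  finally show ?thesis .
qed

lemma fnorm_nonneg: "0 \<le> fnorm G S X"
  by (simp add: fnorm_L2)

lemma S_eps_le:
  assumes "\<delta> \<in> S_eps G \<epsilon>" "i < nverts G"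
  shows "fnorm G (incident G i) (\<delta> i) \<le> \<epsilon>"
proof -
  have "fnorm G (incident G i) (\<delta> i) \<le> (\<Sum>i<nverts G. fnorm G (incident G i) (\<delta> i))"
    using assms(2) by (intro member_le_sum fnorm_nonneg) auto
  then show ?thesis using assms(1) by (simp add: S_eps_def)
qed

lemma Rm_bound:
  assumes tn: "tnet G Ts" and d: "\<delta> \<in> S_eps G \<epsilon>" and e1: "\<epsilon> \<le> 1"
  shows "fnorm G (open_legs G) (Rm G Ts \<delta>) \<le> Cst G Ts * \<epsilon>^2"
proof -
  let ?n = "nverts G"
  let ?B = "idx G (open_legs G)"
  let ?C = "idx G (contracted G)"
  let ?K = "Kc G Ts"
  have "0 \<le> (\<Sum>i<nverts G. fnorm G (incident G i) (\<delta> i))" by (intro sum_nonneg fnorm_nonneg)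
  then have e0: "0 \<le> \<epsilon>" using d by (auto simp: S_eps_def)
  have pt: "\<bar>Rm G Ts \<delta> \<beta>\<bar> \<le> real (card ?C) * (\<epsilon>^2 * (?K+1)^?n)" if b: "\<beta> \<in> ?B" for \<beta>
  proof -
    define E where "E = (\<lambda>\<gamma>. (\<Prod>k<?n. Ts k (ai G k \<beta> \<gamma>) + \<delta> k (ai G k \<beta> \<gamma>))
        - (\<Prod>k<?n. Ts k (ai G k \<beta> \<gamma>))
        - (\<Sum>i<?n. \<Prod>k<?n. if k = i then \<delta> k (ai G k \<beta> \<gamma>) else Ts k (ai G k \<beta> \<gamma>)))"
    have eqR: "Rm G Ts \<delta> \<beta> = (\<Sum>\<gamma>\<in>?C. E \<gamma>)"
    proof -
      have "Lin G Ts \<delta> \<beta> = (\<Sum>i<?n. \<Sum>\<gamma>\<in>?C. \<Prod>k<?n. if k = i then \<delta> k (ai G k \<beta> \<gamma>) else Ts k (ai G k \<beta> \<gamma>))"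
        unfolding Lin_def lin_term[OF b] ..
      also have "\<dots> = (\<Sum>\<gamma>\<in>?C. \<Sum>i<?n. \<Prod>k<?n. if k = i then \<delta> k (ai G k \<beta> \<gamma>) else Ts k (ai G k \<beta> \<gamma>))"
        by (rule sum.swap)
      finally have L: "Lin G Ts \<delta> \<beta> = \<dots>" .
      show ?thesis unfolding Rm_def L contract_eq[OF b] E_def by (simp only: sum_subtractf)
    qed
    have Eb: "\<bar>E \<gamma>\<bar> \<le> \<epsilon>^2 * (?K+1)^?n" if g: "\<gamma> \<in> ?C" for \<gamma>
    proof -
      have ya: "\<bar>\<delta> k (ai G k \<beta> \<gamma>)\<bar> \<le> fnorm G (incident G k) (\<delta> k)" for k
        unfolding fnorm_L2 by (rule abs_le_L2[OF finite_idx[OF tnet_finite_inc[OF tn]] ai_in[OF b g]])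
      have sy: "(\<Sum>k<?n. \<bar>\<delta> k (ai G k \<beta> \<gamma>)\<bar>) \<le> \<epsilon>"
      proof -
        have "(\<Sum>k<?n. \<bar>\<delta> k (ai G k \<beta> \<gamma>)\<bar>) \<le> (\<Sum>k<?n. fnorm G (incident G k) (\<delta> k))"
          by (rule sum_mono) (rule ya)
        then show ?thesis using d by (simp add: S_eps_def)
      qed
      have "\<bar>E \<gamma>\<bar> \<le> (\<Sum>k<?n. \<bar>\<delta> k (ai G k \<beta> \<gamma>)\<bar>)^2 * (?K+1)^?n"
        unfolding E_def
      proof (rule prod_lin_bound[where K = ?K and x="\<lambda>k. Ts k (ai G k \<beta> \<gamma>)" and y="\<lambda>k. \<delta> k (ai G k \<beta> \<gamma>)"])
        fix k assume "k < ?n"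
        then show "\<bar>Ts k (ai G k \<beta> \<gamma>)\<bar> \<le> ?K" using Ts_bound[OF tn _ ai_in[OF b g]] by blast
        show "\<bar>\<delta> k (ai G k \<beta> \<gamma>)\<bar> \<le> 1" using ya[of k] S_eps_le[OF d \<open>k < ?n\<close>] e1 by linarith
      qed (rule Kc_nonneg)
      also have "\<dots> \<le> \<epsilon>^2 * (?K+1)^?n"
        using sy Kc_nonneg[of G Ts] by (intro mult_right_mono power_mono) (auto simp: sum_nonneg)
      finally show ?thesis .
    qed
    have "\<bar>\<Sum>\<gamma>\<in>?C. E \<gamma>\<bar> \<le> (\<Sum>\<gamma>\<in>?C. \<bar>E \<gamma>\<bar>)" by (rule sum_abs)
    also have "\<dots> \<le> real (card ?C) * (\<epsilon>^2 * (?K+1)^?n)"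
      by (rule sum_bounded_above) (rule Eb)
    finally show ?thesis unfolding eqR .
  qed
  have "fnorm G (open_legs G) (Rm G Ts \<delta>) \<le> (\<Sum>\<beta>\<in>?B. \<bar>Rm G Ts \<delta> \<beta>\<bar>)"
    unfolding fnorm_L2 by (rule L2_set_le_sum_abs)
  also have "\<dots> \<le> real (card ?B) * (real (card ?C) * (\<epsilon>^2 * (?K+1)^?n))"
    by (rule sum_bounded_above) (rule pt)
  finally show ?thesis by (simp add: Cst_def algebra_simps)
qed


definition Lmx :: "'e tn_graph \<Rightarrow> (nat \<Rightarrow> 'e tensor) \<Rightarrow> real" where
  "Lmx G Ts = (MAX i\<in>{..<nverts G}. spec_norm (env_mat G Ts i))"

lemma Lmx_ge: "i < nverts G \<Longrightarrow> spec_norm (env_mat G Ts i) \<le> Lmx G Ts"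
  unfolding Lmx_def by (rule Max_ge) auto

lemma Lmx_attained:
  assumes tn: "tnet G Ts" obtains i0 where "i0 < nverts G" "spec_norm (env_mat G Ts i0) = Lmx G Ts"
proof -
  have "Lmx G Ts \<in> (\<lambda>i. spec_norm (env_mat G Ts i)) ` {..<nverts G}"
    unfolding Lmx_def using tn by (intro Max_in) (auto simp: tnet_def)
  then show ?thesis using that by auto
qed

lemma spec_env_nonneg: "tnet G Ts \<Longrightarrow> 0 \<le> spec_norm (env_mat G Ts i)"
  by (rule spec_nonneg) (simp add: env_mat_def tnet_card_inc)

lemma Lmx_nonneg: "tnet G Ts \<Longrightarrow> 0 \<le> Lmx G Ts"
  by (metis Lmx_attained spec_env_nonneg)

lemma err_decomp:
  "(\<lambda>\<beta>. contract G (\<lambda>i \<alpha>. Ts i \<alpha> + \<delta> i \<alpha>) \<beta> - contract G Ts \<beta>) = (\<lambda>\<beta>. Lin G Ts \<delta> \<beta> + Rm G Ts \<delta> \<beta>)"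
  by (simp add: Rm_def)

lemma upper_bound:
  assumes tn: "tnet G Ts" and d: "\<delta> \<in> S_eps G \<epsilon>" and e1: "\<epsilon> \<le> 1"
  shows "abs_err G Ts \<delta> \<le> Lmx G Ts * \<epsilon> + Cst G Ts * \<epsilon>^2"
proof -
  let ?B = "idx G (open_legs G)"
  have "abs_err G Ts \<delta> = L2_set (\<lambda>\<beta>. Lin G Ts \<delta> \<beta> + Rm G Ts \<delta> \<beta>) ?B"
    unfolding abs_err_def err_decomp fnorm_L2 ..
  also have "\<dots> \<le> L2_set (Lin G Ts \<delta>) ?B + L2_set (Rm G Ts \<delta>) ?B"
    by (rule L2_set_triangle_ineq)
  also have "L2_set (Lin G Ts \<delta>) ?B \<le> Lmx G Ts * \<epsilon>"
  proof -
    have "L2_set (Lin G Ts \<delta>) ?B \<le> (\<Sum>i<nverts G. L2_set (\<lambda>\<beta>. contract G (Ts(i:=\<delta> i)) \<beta>) ?B)"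
      unfolding Lin_def by (rule L2_set_sum_le)
    also have "\<dots> \<le> (\<Sum>i<nverts G. Lmx G Ts * fnorm G (incident G i) (\<delta> i))"
    proof (rule sum_mono)
      fix i assume i: "i \<in> {..<nverts G}"
      have "L2_set (\<lambda>\<beta>. contract G (Ts(i:=\<delta> i)) \<beta>) ?B \<le> spec_norm (env_mat G Ts i) * fnorm G (incident G i) (\<delta> i)"
        using fnorm_contract_le[OF tn, of i "\<delta> i"] i by (simp add: fnorm_L2)
      also have "\<dots> \<le> Lmx G Ts * fnorm G (incident G i) (\<delta> i)"
        using Lmx_ge[of i G Ts] i by (intro mult_right_mono fnorm_nonneg) auto
      finally show "L2_set (\<lambda>\<beta>. contract G (Ts(i:=\<delta> i)) \<beta>) ?B \<le> Lmx G Ts * fnorm G (incident G i) (\<delta> i)" .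
    qed
    also have "\<dots> = Lmx G Ts * (\<Sum>i<nverts G. fnorm G (incident G i) (\<delta> i))"
      by (simp add: sum_distrib_left)
    also have "\<dots> \<le> Lmx G Ts * \<epsilon>"
      using d Lmx_nonneg[OF tn] by (intro mult_left_mono) (auto simp: S_eps_def)
    finally show ?thesis .
  qed
  also have "L2_set (Rm G Ts \<delta>) ?B \<le> Cst G Ts * \<epsilon>^2"
    using Rm_bound[OF tn d e1] by (simp add: fnorm_L2)
  finally show ?thesis by simp
qed

lemma zero_pert: "0 \<le> \<epsilon> \<Longrightarrow> (\<lambda>_ _. 0) \<in> S_eps G \<epsilon>"
  by (simp add: S_eps_def perturbations_def is_tensor_def fnorm_def)

lemma lower_bound:
  assumes tn: "tnet G Ts" and e0: "0 < \<epsilon>" and e1: "\<epsilon> \<le> 1" and eta: "0 < \<eta>"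
  shows "\<exists>\<delta>\<in>S_eps G \<epsilon>. (Lmx G Ts - \<eta>) * \<epsilon> - Cst G Ts * \<epsilon>^2 \<le> abs_err G Ts \<delta>"
proof -
  obtain i0 where i0: "i0 < nverts G" "spec_norm (env_mat G Ts i0) = Lmx G Ts"
    using Lmx_attained[OF tn] by blast
  let ?M = "env_mat G Ts i0"
  let ?S = "incident G i0"
  let ?A = "idx G ?S"
  let ?m = "card ?A"
  let ?en = "idx_enum G ?S"
  let ?B = "idx G (open_legs G)"
  have fS: "finite ?S" by (rule tnet_finite_inc[OF tn])
  have bij: "bij_betw ?en {..<?m} ?A" by (rule idx_enum_bij[OF fS])
  have dc: "dim_col ?M = ?m" by (simp add: env_mat_def)
  obtain x where x: "x \<in> carrier_vec ?m" "x \<noteq> 0\<^sub>v ?m"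
    "(spec_norm ?M - \<eta>) * vnorm2 x < vnorm2 (?M *\<^sub>v x)"
    using spec_approx[of ?M \<eta>] eta tnet_card_inc[OF tn, of i0] dc by auto
  have vx: "0 < vnorm2 x" using vnorm2_pos x by blast
  define X where "X = (\<lambda>\<alpha>. if \<alpha> \<in> ?A then x $ inv_into {..<?m} ?en \<alpha> else 0)"
  have tX: "tvec G ?S X = x"
  proof (rule eq_vecI)
    fix k assume "k < dim_vec x"
    then have k: "k < ?m" using x by auto
    have "?en k \<in> ?A" using bij k by (auto simp: bij_betw_def)
    moreover have "inv_into {..<?m} ?en (?en k) = k"
      using bij k by (intro inv_into_f_f) (auto simp: bij_betw_def)
    ultimately show "tvec G ?S X $ k = x $ k" using k by (simp add: tvec_def X_def)
  qed (use x in \<open>simp add: tvec_def\<close>)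
  have fX: "fnorm G ?S X = vnorm2 x" using fnorm_tvec[OF fS, where X=X and G=G] tX by simp
  define c where "c = \<epsilon> / vnorm2 x"
  have c0: "0 < c" using e0 vx by (simp add: c_def)
  define D where "D = (\<lambda>\<alpha>. c * X \<alpha>)"
  define \<delta> where "\<delta> = (\<lambda>i. if i = i0 then D else (\<lambda>_. 0))"
  have fD: "fnorm G ?S D = \<epsilon>"
  proof -
    have "fnorm G ?S D = c * fnorm G ?S X"
      unfolding fnorm_L2 D_def using c0 by (simp add: L2_set_right_distrib)
    then show ?thesis using fX vx by (simp add: c_def)
  qed
  have sumf: "(\<Sum>i<nverts G. fnorm G (incident G i) (\<delta> i)) = \<epsilon>"
  proof -
    have "(\<Sum>i<nverts G. fnorm G (incident G i) (\<delta> i)) = (\<Sum>i<nverts G. if i = i0 then fnorm G ?S D else 0)"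
      by (rule sum.cong) (auto simp: \<delta>_def fnorm_def)
    also have "\<dots> = fnorm G ?S D" using i0 by simp
    finally show ?thesis using fD by simp
  qed
  have dS: "\<delta> \<in> S_eps G \<epsilon>"
    unfolding S_eps_def perturbations_def using sumf
    by (auto simp: \<delta>_def is_tensor_def D_def X_def)
  have linb: "Lin G Ts \<delta> \<beta> = c * contract G (Ts(i0:=X)) \<beta>" if b: "\<beta> \<in> ?B" for \<beta>
  proof -
    have "Lin G Ts \<delta> \<beta> = (\<Sum>i<nverts G. if i = i0 then contract G (Ts(i0:=D)) \<beta> else 0)"
      unfolding Lin_def
    proof (rule sum.cong[OF refl])
      fix i assume i: "i \<in> {..<nverts G}"
      show "contract G (Ts(i:=\<delta> i)) \<beta> = (if i = i0 then contract G (Ts(i0:=D)) \<beta> else 0)"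
        using i by (simp add: \<delta>_def site_form[OF _ b])
    qed
    also have "\<dots> = contract G (Ts(i0:=D)) \<beta>" using i0 by simp
    also have "\<dots> = c * contract G (Ts(i0:=X)) \<beta>"
      using i0 by (simp add: site_form[OF _ b] D_def sum_distrib_left mult.assoc)
    finally show ?thesis .
  qed
  have "(Lmx G Ts - \<eta>) * \<epsilon> = c * ((spec_norm ?M - \<eta>) * vnorm2 x)"
    using i0 vx by (simp add: c_def)
  also have "\<dots> \<le> c * vnorm2 (?M *\<^sub>v x)"
    using x(3) c0 by (intro mult_left_mono) auto
  also have "vnorm2 (?M *\<^sub>v x) = fnorm G (open_legs G) (contract G (Ts(i0:=X)))"
    using env_mult[OF tn i0(1), of X] tX fnorm_tvec[OF tnet_finite_open[OF tn]] by simp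
  also have "c * \<dots> = L2_set (Lin G Ts \<delta>) ?B"
    unfolding fnorm_L2 using c0 by (simp add: L2_set_right_distrib linb cong: L2_set_cong)
  also have "\<dots> = L2_set (\<lambda>\<beta>. (Lin G Ts \<delta> \<beta> + Rm G Ts \<delta> \<beta>) + - Rm G Ts \<delta> \<beta>) ?B"
    by simp
  also have "\<dots> \<le> L2_set (\<lambda>\<beta>. Lin G Ts \<delta> \<beta> + Rm G Ts \<delta> \<beta>) ?B + L2_set (\<lambda>\<beta>. - Rm G Ts \<delta> \<beta>) ?B"
    by (rule L2_set_triangle_ineq)
  also have "\<dots> = abs_err G Ts \<delta> + fnorm G (open_legs G) (Rm G Ts \<delta>)"
    unfolding abs_err_def err_decomp fnorm_L2 L2_set_minus ..
  also have "\<dots> \<le> abs_err G Ts \<delta> + Cst G Ts * \<epsilon>^2"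
    using Rm_bound[OF tn dS e1] by simp
  finally show ?thesis using dS by (intro bexI[of _ \<delta>]) auto
qed

theorem mainTheorem2:
  fixes G :: "'e tn_graph" and Ts :: "nat \<Rightarrow> 'e tensor"
  assumes "tnet G Ts"
    and "contract G Ts \<noteq> (\<lambda>_. 0)"
  shows "((\<lambda>\<epsilon>. SUP \<delta>\<in>S_eps G \<epsilon>. abs_err G Ts \<delta> / \<epsilon>)
            \<longlongrightarrow> (MAX i\<in>{..<nverts G}. spec_norm (env_mat G Ts i))) (at_right 0)
       \<and> kappa_a G Ts = (MAX i\<in>{..<nverts G}. spec_norm (env_mat G Ts i))
       \<and> kappa_r G Ts = (\<Sum>i<nverts G. fnorm G (incident G i) (Ts i))
                          / fnorm G (open_legs G) (contract G Ts)
                          * (MAX i\<in>{..<nverts G}. spec_norm (env_mat G Ts i))"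
proof -
  note tn = assms(1)
  define f where "f = (\<lambda>\<epsilon>. SUP \<delta>\<in>S_eps G \<epsilon>. abs_err G Ts \<delta> / \<epsilon>)"
  let ?L = "Lmx G Ts"
  let ?C = "Cst G Ts"
  have bnds: "?L - ?C * \<epsilon> \<le> f \<epsilon> \<and> f \<epsilon> \<le> ?L + ?C * \<epsilon>" if e: "0 < \<epsilon>" "\<epsilon> \<le> 1" for \<epsilon>
  proof -
    have ub: "abs_err G Ts \<delta> / \<epsilon> \<le> ?L + ?C * \<epsilon>" if d: "\<delta> \<in> S_eps G \<epsilon>" for \<delta>
    proof -
      have "abs_err G Ts \<delta> \<le> (?L + ?C * \<epsilon>) * \<epsilon>"
        using upper_bound[OF tn d e(2)] by (simp add: power2_eq_square algebra_simps)
      then show ?thesis using e by (simp add: divide_le_eq)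
    qed
    have ne: "S_eps G \<epsilon> \<noteq> {}" using zero_pert[of \<epsilon> G] e by auto
    have bdd: "bdd_above ((\<lambda>\<delta>. abs_err G Ts \<delta> / \<epsilon>) ` S_eps G \<epsilon>)"
      by (rule bdd_aboveI2) (rule ub)
    have up: "f \<epsilon> \<le> ?L + ?C * \<epsilon>" unfolding f_def by (rule cSUP_least[OF ne]) (rule ub)
    have lo: "?L - ?C * \<epsilon> \<le> f \<epsilon>"
    proof (rule field_le_epsilon)
      fix \<eta> :: real assume eta: "0 < \<eta>"
      obtain \<delta> where d: "\<delta> \<in> S_eps G \<epsilon>" "(?L - \<eta>) * \<epsilon> - ?C * \<epsilon>^2 \<le> abs_err G Ts \<delta>"
        using lower_bound[OF tn e(1) e(2) eta] by blast
      have "?L - \<eta> - ?C * \<epsilon> \<le> abs_err G Ts \<delta> / \<epsilon>"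
        using d(2) e by (simp add: le_divide_eq power2_eq_square algebra_simps)
      then have "?L - \<eta> - ?C * \<epsilon> \<le> f \<epsilon>" unfolding f_def
        by (rule cSUP_upper2[OF bdd d(1)])
      then show "?L - ?C * \<epsilon> \<le> f \<epsilon> + \<eta>" by linarith
    qed
    show ?thesis using up lo by blast
  qed
  have ev: "eventually (\<lambda>\<epsilon>. 0 < \<epsilon> \<and> \<epsilon> \<le> 1) (at_right (0::real))"
    by (rule eventually_at_rightI[of _ 1]) auto
  have lim1: "((\<lambda>\<epsilon>. ?L - ?C * \<epsilon>) \<longlongrightarrow> ?L) (at_right 0)"
  proof -
    have "((\<lambda>\<epsilon>. ?L - ?C * \<epsilon>) \<longlongrightarrow> ?L - ?C * 0) (at_right (0::real))"
      by (intro tendsto_intros)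
    then show ?thesis by simp
  qed
  have lim2: "((\<lambda>\<epsilon>. ?L + ?C * \<epsilon>) \<longlongrightarrow> ?L) (at_right 0)"
  proof -
    have "((\<lambda>\<epsilon>. ?L + ?C * \<epsilon>) \<longlongrightarrow> ?L + ?C * 0) (at_right (0::real))"
      by (intro tendsto_intros)
    then show ?thesis by simp
  qed
  have lim: "(f \<longlongrightarrow> ?L) (at_right 0)"
  proof (rule tendsto_sandwich[OF _ _ lim1 lim2])
    show "eventually (\<lambda>\<epsilon>. ?L - ?C * \<epsilon> \<le> f \<epsilon>) (at_right 0)"
      using ev by eventually_elim (use bnds in blast)
    show "eventually (\<lambda>\<epsilon>. f \<epsilon> \<le> ?L + ?C * \<epsilon>) (at_right 0)"
      using ev by eventually_elim (use bnds in blast)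
  qed
  have ka: "kappa_a G Ts = ?L"
    unfolding kappa_a_def f_def[symmetric] by (rule tendsto_Lim[OF trivial_limit_at_right_real lim])
  show ?thesis using lim ka unfolding f_def Lmx_def by (simp add: kappa_r_def)
qed

end
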